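(* Let $T,\varepsilon,\eta>0$ and $0\le a\le b<\infty$. Suppose that (AA) holds. Then $\liminf_{n\to\infty}\mathbb{P}\Big(\max_{1\le k\le K}\sup_{0\le s\le t\le T}\big|\bar{\mathcal{G}}^n_k(s,t)((a,b))-\mathcal{D}^*_k(s,t)((a,b))\big|\le\varepsilon\Big)\ge1-\eta$.
   Context: Fix $K\in\mathbb{N}$. For each $1\le k\le K$, $E_k(\cdot)$ is a renewal process with rate $\lambda_k\in(0,\infty)$ and strictly positive interarrival times, and $E^n_k(t)=E_k(nt)$. $\Gamma_k$ is a continuous probability distribution on $(0,\infty)$ with finite mean. Assumption (AA): for each $n\in\mathbb{N}$ there are $K$ independent sequences $\{g^n_{k,i}\}_{i\in\mathbb{N}}$, $1\le k\le K$, each of strictly positive i.i.d. random variables, independent of the arrival processes, with $g^n_{k,1}$ having distribution $\Gamma^n_k$ of finite mean (not necessarily continuous), such that $\lim_{M\to\infty}\sup_n\int_{(M,\infty)}x\,\Gamma^n_k(dx)=0$ and $\Gamma^n_k\to\Gamma_k$ weakly as $n\to\infty$, for each $k$. For $x\in\mathbb{R}_+$, $\delta^+_x$ is the unit mass at $x$ if $x>0$ and zero otherwise. Define $\bar{\mathcal{G}}^n_k(t)=\frac1n\sum_{i=1}^{E^n_k(t)}\delta^+_{g^n_{k,i}}$, $\mathcal{D}^*_k(t)=\lambda_kt\,\Gamma_k$, and for $0\le s\le t$, $\bar{\mathcal{G}}^n_k(s,t)=\bar{\mathcal{G}}^n_k(t)-\bar{\mathcal{G}}^n_k(s)$, $\mathcal{D}^*_k(s,t)=\mathcal{D}^*_k(t)-\mathcal{D}^*_k(s)$.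 *)

theory Defs
  imports "HOL-Probability.Probability"
begin

definition renewal_count :: "(nat \<Rightarrow> real) \<Rightarrow> real \<Rightarrow> nat" where
  "renewal_count u t = card {m. 1 \<le> m \<and> (\<Sum>i<m. u i) \<le> t}"

definition deltap :: "real \<Rightarrow> real set \<Rightarrow> real" where
  "deltap x A = (if 0 < x \<and> x \<in> A then 1 else 0)"

text \<open>(1/n) sum_{i < m} deltap (g i), evaluated at A (0-based indexing of the g's).\<close>
definition Gbar :: "nat \<Rightarrow> (nat \<Rightarrow> real) \<Rightarrow> nat \<Rightarrow> real set \<Rightarrow> real" where
  "Gbar n g m A = (1 / real n) * (\<Sum>i<m. deltap (g i) A)"

end

theory Submission
  imports Defs "HOL-Real_Asymp.Real_Asymp"
begin



lemma measurable_card_nat: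
  fixes P :: "nat \<Rightarrow> 'a \<Rightarrow> bool"
  assumes P: "\<And>m. {w\<in>space M. P m w} \<in> sets M"
  shows "(\<lambda>w. card {m. P m w}) \<in> measurable M (count_space UNIV)"
proof -
  have Pm[measurable]: "P m \<in> measurable M (count_space UNIV)" for m by (subst pred_def) (rule P)
  have fin: "{w\<in>space M. \<forall>m. P m w \<longleftrightarrow> m \<in> F} \<in> sets M" for F :: "nat set"
    by measurable
  have inf: "{w\<in>space M. \<forall>N. \<exists>m\<ge>N. P m w} \<in> sets M" by measurable
  have eq: "(\<lambda>w. card {m. P m w}) -` {j} \<inter> space M =
     (\<Union>F\<in>{F. finite F \<and> card F = j}. {w\<in>space M. \<forall>m. P m w \<longleftrightarrow> m \<in> F}) \<union>
     (if j = 0 then {w\<in>space M. \<forall>N. \<exists>m\<ge>N. P m w} else {})" for j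
  proof (intro set_eqI iffI)
    fix w assume w: "w \<in> (\<lambda>w. card {m. P m w}) -` {j} \<inter> space M"
    show "w \<in> (\<Union>F\<in>{F. finite F \<and> card F = j}. {w\<in>space M. \<forall>m. P m w \<longleftrightarrow> m \<in> F}) \<union>
     (if j = 0 then {w\<in>space M. \<forall>N. \<exists>m\<ge>N. P m w} else {})"
    proof (cases "finite {m. P m w}")
      case True
      then show ?thesis using w by (intro UnI1 UN_I[of "{m. P m w}"]) auto
    next
      case False
      then have "\<forall>N. \<exists>m\<ge>N. P m w" using infinite_nat_iff_unbounded_le by auto
      then show ?thesis using w False by auto
    qed
  next
    fix w assume w: "w \<in> (\<Union>F\<in>{F. finite F \<and> card F = j}. {w\<in>space M. \<forall>m. P m w \<longleftrightarrow> m \<in> F}) \<union>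
     (if j = 0 then {w\<in>space M. \<forall>N. \<exists>m\<ge>N. P m w} else {})"
    show "w \<in> (\<lambda>w. card {m. P m w}) -` {j} \<inter> space M"
    proof (cases "w \<in> (\<Union>F\<in>{F. finite F \<and> card F = j}. {w\<in>space M. \<forall>m. P m w \<longleftrightarrow> m \<in> F})")
      case True
      then obtain F where F: "finite F" "card F = j" "w \<in> space M" "\<forall>m. P m w \<longleftrightarrow> m \<in> F" by blast
      then have "{m. P m w} = F" by auto
      then show ?thesis using F by auto
    next
      case False
      then have "j = 0" "w \<in> space M" "\<forall>N. \<exists>m\<ge>N. P m w" using w by (auto split: if_splits)
      then have "infinite {m. P m w}" using infinite_nat_iff_unbounded_le by auto
      then show ?thesis using \<open>j = 0\<close> \<open>w \<in> space M\<close> by auto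
    qed
  qed
  show ?thesis
  proof (rule iffD2[OF measurable_count_space_eq_countable])
    show "countable (UNIV :: nat set)" by simp
    have "(\<lambda>w. card {m. P m w}) -` {j} \<inter> space M \<in> sets M" for j
      unfolding eq
      by (intro sets.Un sets.countable_UN'' countable_subset[OF _ countable_Collect_finite]) (auto simp: fin inf)
    then show "(\<lambda>w. card {m. P m w}) \<in> space M \<rightarrow> UNIV \<and> (\<forall>a\<in>UNIV. (\<lambda>w. card {m. P m w}) -` {a} \<inter> space M \<in> sets M)"
      by auto
  qed
qed



lemma renewal_rconst:
  fixes u :: "nat \<Rightarrow> real"
  assumes u: "\<And>i. u i \<ge> 0"
  shows "\<exists>d>0. \<forall>y. x \<le> y \<and> y < x + d \<longrightarrow> renewal_count u y = renewal_count u x"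
proof -
  define S where "S m = (\<Sum>i<m. u i)" for m
  have Smono: "S m \<le> S m'" if "m \<le> m'" for m m'
    unfolding S_def using that u by (intro sum_mono2) auto
  define A where "A z = {m. 1 \<le> m \<and> S m \<le> z}" for z
  have rc: "renewal_count u z = card (A z)" for z unfolding renewal_count_def A_def S_def by simp
  show ?thesis
  proof (cases "finite (A x)")
    case False
    have "renewal_count u y = renewal_count u x" if "x \<le> y" for y
    proof -
      have "A x \<subseteq> A y" using that unfolding A_def by auto
      then have "infinite (A y)" using False finite_subset by blast
      then show ?thesis using False by (simp add: rc)
    qed
    then show ?thesis by (metis less_numeral_extra(1))
  next
    case True
    have "\<exists>m0. m0 \<ge> 1 \<and> m0 \<notin> A x"
    proof (rule ccontr)
      assume "\<not> ?thesis"
      then have "{1..} \<subseteq> A x" by auto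
      then show False using True finite_subset infinite_Ici by blast
    qed
    then obtain m0 where m0: "m0 \<ge> 1" "m0 \<notin> A x" by blast
    then have Sm0: "S m0 > x" unfolding A_def by auto
    define D where "D = (\<lambda>m. S m - x) ` {m\<in>{1..m0}. S m > x}"
    have Dfin: "finite D" and Dne: "D \<noteq> {}" unfolding D_def using m0 Sm0 by auto
    define d where "d = Min D"
    have dpos: "d > 0" unfolding d_def using Dfin Dne by (subst Min_gr_iff) (auto simp: D_def)
    have dle: "d \<le> S m - x" if "m \<in> {1..m0}" "S m > x" for m
      unfolding d_def using Dfin that by (intro Min_le) (auto simp: D_def)
    have "A y = A x" if y: "x \<le> y" "y < x + d" for y
    proof
      show "A x \<subseteq> A y" using y unfolding A_def by auto
      show "A y \<subseteq> A x"
      proof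
        fix m assume m: "m \<in> A y"
        show "m \<in> A x"
        proof (cases "m \<le> m0")
          case True
          show ?thesis
          proof (rule ccontr)
            assume "m \<notin> A x"
            then have "S m > x" using m unfolding A_def by auto
            then have "d \<le> S m - x" using dle[of m] True m unfolding A_def by auto
            moreover have "S m \<le> y" using m unfolding A_def by simp
            ultimately show False using y by linarith
          qed
        next
          case False
          then have "S m0 \<le> S m" by (intro Smono) auto
          moreover have "d \<le> S m0 - x" using dle[of m0] m0 Sm0 by auto
          moreover have "S m \<le> y" using m unfolding A_def by simp
          ultimately show ?thesis using y by linarith
        qed
      qed
    qed
    then have "\<forall>y. x \<le> y \<and> y < x + d \<longrightarrow> renewal_count u y = renewal_count u x"
      unfolding rc by (intro allI impI arg_cong[where f=card]) blast
    then show ?thesis using dpos by blast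
  qed
qed



lemma sup_reduce:
  fixes phi :: "real \<Rightarrow> real" and l p e T :: real
  assumes rc: "\<And>x. \<exists>d>0. \<forall>y. x \<le> y \<and> y < x + d \<longrightarrow> phi y = phi x"
    and H: "\<forall>s\<in>insert T (\<rat> \<inter> {0..T}). \<forall>t\<in>insert T (\<rat> \<inter> {0..T}). s \<le> t \<longrightarrow>
              \<bar>(phi t - phi s) - (l * t - l * s) * p\<bar> \<le> e"
    and s: "0 \<le> s" "s \<le> t" "t \<le> T"
  shows "\<bar>(phi t - phi s) - (l * t - l * s) * p\<bar> \<le> e"
proof (rule ccontr)
  define D where "D = insert T (\<rat> \<inter> {0..T})"
  define F where "F a b = (phi b - phi a) - (l * b - l * a) * p" for a b
  assume "\<not> ?thesis"
  then have v: "\<bar>F s t\<bar> > e" unfolding F_def by simp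
  define eta where "eta = (\<bar>F s t\<bar> - e) / (2 * (\<bar>l * p\<bar> + 1))"
  have etapos: "eta > 0" unfolding eta_def using v by (intro divide_pos_pos) auto
  have key: "2 * \<bar>l * p\<bar> * eta < \<bar>F s t\<bar> - e"
  proof -
    have "2 * \<bar>l * p\<bar> * eta < 2 * (\<bar>l * p\<bar> + 1) * eta" using etapos by simp
    also have "\<dots> = \<bar>F s t\<bar> - e" unfolding eta_def by simp
    finally show ?thesis .
  qed
  have pick: "\<exists>r\<in>D. z \<le> r \<and> r \<le> z + eta \<and> r \<le> w \<and> phi r = phi z \<and> (z = w \<longrightarrow> r = w)"
    if z: "0 \<le> z" "z \<le> w" "w \<le> T" "w \<in> D" for z w
  proof (cases "z = w")
    case True then show ?thesis using z etapos by (intro bexI[of _ w]) auto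
  next
    case False
    then have zw: "z < w" using z by simp
    obtain d where d: "d > 0" "\<forall>y. z \<le> y \<and> y < z + d \<longrightarrow> phi y = phi z" using rc by blast
    have "z < min (min (z + d) (z + eta)) w" using zw d etapos by simp
    then obtain r where r: "r \<in> \<rat>" "z < r" "r < min (min (z + d) (z + eta)) w"
      using Rats_dense_in_real by blast
    have "r \<in> D" unfolding D_def using r z by auto
    moreover have "phi r = phi z" using d(2) r by (meson less_imp_le min_less_iff_conj)
    moreover have "z \<le> r" "r \<le> z + eta" "r \<le> w" using r by auto
    ultimately show ?thesis using False by blast
  qed
  have TD: "T \<in> D" unfolding D_def by simp
  obtain t' where t': "t' \<in> D" "t \<le> t'" "t' \<le> t + eta" "t' \<le> T" "phi t' = phi t"
    using pick[of t T] s TD by auto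
  have t'0: "0 \<le> t'" using t' s by simp
  obtain s' where s': "s' \<in> D" "s \<le> s'" "s' \<le> s + eta" "s' \<le> t'" "phi s' = phi s"
    "s = t' \<longrightarrow> s' = t'"
    using pick[of s t'] s t' by auto
  have ss': "s' \<le> t'" using s' by simp
  have "\<bar>F s' t'\<bar> \<le> e" using H s' t' ss' unfolding F_def D_def by blast
  moreover have "\<bar>F s' t' - F s t\<bar> \<le> 2 * \<bar>l * p\<bar> * eta"
  proof -
    have eq: "F s' t' - F s t = - (l * p) * (t' - t) + (l * p) * (s' - s)"
      unfolding F_def using s'(5) t'(5) by (simp add: algebra_simps)
    have "\<bar>- (l * p) * (t' - t) + (l * p) * (s' - s)\<bar> \<le> \<bar>- (l * p) * (t' - t)\<bar> + \<bar>(l * p) * (s' - s)\<bar>"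
      by (rule abs_triangle_ineq)
    also have "\<dots> = \<bar>l * p\<bar> * \<bar>t' - t\<bar> + \<bar>l * p\<bar> * \<bar>s' - s\<bar>"
      by (simp only: abs_mult abs_minus_cancel mult_minus_left)
    also have "\<dots> \<le> \<bar>l * p\<bar> * eta + \<bar>l * p\<bar> * eta"
      using s'(2,3) t'(2,3) by (intro add_mono mult_left_mono) auto
    finally show ?thesis unfolding eq by (simp add: algebra_simps)
  qed
  ultimately show False using key by linarith
qed



lemma (in prob_space) unif_hoeffding:
  fixes Y :: "nat \<Rightarrow> 'a \<Rightarrow> real" and c eps :: real and N :: nat
  assumes indep: "indep_vars (\<lambda>_. borel) Y UNIV"
    and ident: "\<And>i. distr M borel (Y i) = distr M borel (Y 0)"
    and bnd: "\<And>i x. x \<in> space M \<Longrightarrow> Y i x \<in> {0..c}"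
    and c: "c > 0" and eps: "eps > 0"
  shows "prob {x\<in>space M. \<exists>m\<le>N. eps \<le> \<bar>(\<Sum>i<m. Y i x) - real m * expectation (Y 0)\<bar>}
          \<le> 2 * real N * exp (-2 * eps\<^sup>2 / (real N * c\<^sup>2))"
proof -
  have meas[measurable]: "\<And>i. Y i \<in> borel_measurable M"
    using indep unfolding indep_vars_def by auto
  define A where "A m = {x\<in>space M. eps \<le> \<bar>(\<Sum>i<m. Y i x) - real m * expectation (Y 0)\<bar>}" for m
  have Asets: "A m \<in> sets M" for m unfolding A_def by measurable
  have sub: "{x\<in>space M. \<exists>m\<le>N. eps \<le> \<bar>(\<Sum>i<m. Y i x) - real m * expectation (Y 0)\<bar>} \<subseteq> (\<Union>m\<in>{1..N}. A m)"
  proof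
    fix x assume "x \<in> {x\<in>space M. \<exists>m\<le>N. eps \<le> \<bar>(\<Sum>i<m. Y i x) - real m * expectation (Y 0)\<bar>}"
    then obtain m where x: "x \<in> space M" and m: "m \<le> N" and e: "eps \<le> \<bar>(\<Sum>i<m. Y i x) - real m * expectation (Y 0)\<bar>" by blast
    have "m \<noteq> 0" using e eps by (cases "m = 0") auto
    then have "m \<in> {1..N}" using m by auto
    then show "x \<in> (\<Union>m\<in>{1..N}. A m)" using x e unfolding A_def by blast
  qed
  have bm: "prob (A m) \<le> 2 * exp (-2 * eps\<^sup>2 / (real m * c\<^sup>2))" if m: "m \<in> {1..N}" for m
  proof -
    interpret H: Hoeffding_ineq_iid M "{..<m}" Y "Y 0" 0 c "expectation (Y 0)"
    proof unfold_locales
      show "indep_vars (\<lambda>_. borel) Y {..<m}" by (rule indep_vars_subset[OF indep]) auto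
      show "distr M borel (Y i) = distr M borel (Y 0)" for i by (rule ident)
      show "AE x in M. Y 0 x \<in> {0..c}" using bnd by auto
      show "finite {..<m}" by simp
      show "random_variable borel (Y 0)" by (rule meas)
    qed
    have "prob {x\<in>space M. \<bar>(\<Sum>i\<in>{..<m}. Y i x) - real (card {..<m}) * expectation (Y 0)\<bar> \<ge> eps} \<le> 2 * exp (-2 * eps\<^sup>2 / (real (card {..<m}) * (c - 0)\<^sup>2))"
      by (rule H.Hoeffding_ineq_abs_ge) (use eps c m in \<open>auto simp: lessThan_empty_iff\<close>)
    then show ?thesis unfolding A_def by simp
  qed
  have "prob {x\<in>space M. \<exists>m\<le>N. eps \<le> \<bar>(\<Sum>i<m. Y i x) - real m * expectation (Y 0)\<bar>} \<le> prob (\<Union>m\<in>{1..N}. A m)"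
    by (rule finite_measure_mono[OF sub]) (use Asets in auto)
  also have "\<dots> \<le> (\<Sum>m\<in>{1..N}. prob (A m))"
    by (rule measure_UNION_le) (use Asets in auto)
  also have "\<dots> \<le> (\<Sum>m\<in>{1..N}. 2 * exp (-2 * eps\<^sup>2 / (real N * c\<^sup>2)))"
  proof (rule sum_mono)
    fix m assume m: "m \<in> {1..N}"
    have "-2 * eps\<^sup>2 / (real m * c\<^sup>2) \<le> -2 * eps\<^sup>2 / (real N * c\<^sup>2)"
      using m c eps by (intro divide_left_mono_neg mult_right_mono mult_pos_pos) (auto simp: power2_eq_square)
    then show "prob (A m) \<le> 2 * exp (-2 * eps\<^sup>2 / (real N * c\<^sup>2))"
      using bm[OF m] by (meson exp_le_cancel_iff mult_le_cancel_left_pos order.trans zero_less_numeral)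
  qed
  also have "\<dots> = 2 * real N * exp (-2 * eps\<^sup>2 / (real N * c\<^sup>2))" by simp
  finally show ?thesis .
qed



lemma card_le_real:
  fixes r :: real
  shows "{m::nat. 1 \<le> m \<and> real m \<le> r} = {1..nat \<lfloor>r\<rfloor>}"
proof (intro set_eqI iffI)
  fix m assume "m \<in> {m::nat. 1 \<le> m \<and> real m \<le> r}"
  then have "1 \<le> m" "real m \<le> r" by auto
  then have "int m \<le> \<lfloor>r\<rfloor>" by (simp add: le_floor_iff)
  then show "m \<in> {1..nat \<lfloor>r\<rfloor>}" using \<open>1 \<le> m\<close> by auto
next
  fix m assume "m \<in> {1..nat \<lfloor>r\<rfloor>}"
  then have "1 \<le> m" "int m \<le> \<lfloor>r\<rfloor>" by auto
  then show "m \<in> {m::nat. 1 \<le> m \<and> real m \<le> r}" by (simp add: le_floor_iff)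
qed

lemma count_bounds:
  fixes u :: "nat \<Rightarrow> real" and lam x e T :: real and C n :: nat
  assumes u: "\<And>i. u i \<ge> 0" and lam: "lam > 0" and x: "0 \<le> x" "x \<le> real n * T"
    and e: "0 < e" "e \<le> 1" and n: "n > 0" and C: "real C > lam * (T + 1)"
    and H: "\<forall>m\<le>C * n. \<bar>(\<Sum>i<m. u i) - real m / lam\<bar> \<le> real n * e"
  shows "lam * (x - real n * e) - 1 \<le> real (renewal_count u x)"
    and "real (renewal_count u x) \<le> lam * (x + real n * e)"
proof -
  define S where "S m = (\<Sum>i<m. u i)" for m
  have Smono: "S m \<le> S m'" if "m \<le> m'" for m m'
    unfolding S_def using that u by (intro sum_mono2) auto
  define A where "A = {m. 1 \<le> m \<and> S m \<le> x}"
  have Hm: "\<bar>S m - real m / lam\<bar> \<le> real n * e" if "m \<le> C * n" for m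
    using H that unfolding S_def by blast
  have rc: "renewal_count u x = card A" unfolding renewal_count_def A_def S_def by simp
  have T0: "T \<ge> 0"
  proof (rule ccontr)
    assume "\<not> T \<ge> 0"
    then have "real n * T < 0" using n by (simp add: mult_pos_neg)
    then show False using x by linarith
  qed
  have lamT: "lam * (T + 1) \<ge> 0" using lam T0 by simp
  have big: "S (C * n) > x"
  proof -
    have "S (C * n) \<ge> real (C * n) / lam - real n * e" using Hm[of "C * n"] by linarith
    moreover have "real (C * n) / lam > real n * (T + 1)"
    proof -
      have "real C / lam > T + 1" using C lam by (simp add: field_simps)
      then have "real n * (real C / lam) > real n * (T + 1)" using n by (intro mult_strict_left_mono) auto
      moreover have "real (C * n) / lam = real n * (real C / lam)" by simp
      ultimately show ?thesis by linarith
    qed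
    moreover have "real n * e \<le> real n * 1" using e by (intro mult_left_mono) auto
    then have "real n * (T + 1) - real n * e \<ge> real n * T" by (simp add: algebra_simps)
    ultimately show ?thesis using x by linarith
  qed
  have sub1: "A \<subseteq> {m. 1 \<le> m \<and> real m \<le> lam * (x + real n * e)}"
  proof
    fix m assume m: "m \<in> A"
    have "m < C * n"
    proof (rule ccontr)
      assume "\<not> m < C * n"
      then have "S (C * n) \<le> S m" by (intro Smono) auto
      then show False using big m unfolding A_def by auto
    qed
    then have "real m / lam - real n * e \<le> S m" using Hm[of m] by linarith
    then have "real m / lam \<le> x + real n * e" using m unfolding A_def by auto
    then have "real m \<le> lam * (x + real n * e)" using lam by (simp add: field_simps)
    then show "m \<in> {m. 1 \<le> m \<and> real m \<le> lam * (x + real n * e)}" using m unfolding A_def by auto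
  qed
  have finA: "finite A" using sub1 unfolding card_le_real by (rule finite_subset) simp
  show "real (renewal_count u x) \<le> lam * (x + real n * e)"
  proof -
    have "card A \<le> card {1..nat \<lfloor>lam * (x + real n * e)\<rfloor>}"
      using sub1 unfolding card_le_real by (intro card_mono) auto
    also have "\<dots> = nat \<lfloor>lam * (x + real n * e)\<rfloor>" by simp
    finally have "real (card A) \<le> real (nat \<lfloor>lam * (x + real n * e)\<rfloor>)" by linarith
    also have "\<dots> \<le> lam * (x + real n * e)"
    proof -
      have "lam * (x + real n * e) \<ge> 0" using lam x e n by simp
      then show ?thesis by linarith
    qed
    finally show ?thesis using rc by simp
  qed
  show "lam * (x - real n * e) - 1 \<le> real (renewal_count u x)"
  proof -
    have sub2: "{m. 1 \<le> m \<and> real m \<le> lam * (x - real n * e)} \<subseteq> A"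
    proof
      fix m assume m: "m \<in> {m. 1 \<le> m \<and> real m \<le> lam * (x - real n * e)}"
      then have m1: "1 \<le> m" and m2: "real m \<le> lam * (x - real n * e)" by auto
      have "real n * e \<ge> 0" using e by simp
      then have "lam * (x - real n * e) \<le> lam * (real n * T)" using lam x by (intro mult_left_mono) auto
      also have "\<dots> \<le> real C * real n" using C lam n T0 by (simp add: algebra_simps)
      finally have "m \<le> C * n" using m2 by (simp flip: of_nat_mult)
      then have "S m \<le> real m / lam + real n * e" using Hm[of m] by linarith
      also have "real m / lam \<le> x - real n * e" using m2 lam by (simp add: field_simps)
      finally show "m \<in> A" using m1 unfolding A_def by auto
    qed
    have "nat \<lfloor>lam * (x - real n * e)\<rfloor> = card {1..nat \<lfloor>lam * (x - real n * e)\<rfloor>}" by simp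
    also have "\<dots> \<le> card A" using sub2 finA unfolding card_le_real by (intro card_mono) auto
    finally have "real (nat \<lfloor>lam * (x - real n * e)\<rfloor>) \<le> real (card A)" by linarith
    moreover have "lam * (x - real n * e) - 1 \<le> real (nat \<lfloor>lam * (x - real n * e)\<rfloor>)" by linarith
    ultimately show ?thesis using rc by simp
  qed
qed



lemma combine_bound:
  fixes n N :: nat and Sx pn p lam t ep e C :: real
  assumes n: "n > 0" and p: "0 \<le> p" "p \<le> 1"
    and HS: "\<bar>Sx - real N * pn\<bar> \<le> e * real n / 8"
    and NC: "real N \<le> C * real n"
    and pc: "\<bar>pn - p\<bar> * C \<le> e / 8"
    and Nlo: "lam * (real n * t - real n * ep) - 1 \<le> real N"
    and Nhi: "real N \<le> lam * (real n * t + real n * ep)"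
    and lep: "lam * ep \<le> e / 8" and ninv: "1 / real n \<le> e / 8"
  shows "\<bar>(1 / real n) * Sx - lam * t * p\<bar> \<le> e / 2"
proof -
  have nr: "real n > 0" using n by simp
  have eq: "(1 / real n) * Sx - lam * t * p =
      (1 / real n) * (Sx - real N * pn) + (real N / real n) * (pn - p) + p * (real N / real n - lam * t)"
    using nr by (simp add: field_simps)
  have b1: "\<bar>(1 / real n) * (Sx - real N * pn)\<bar> \<le> e / 8"
  proof -
    have "\<bar>(1 / real n) * (Sx - real N * pn)\<bar> = \<bar>Sx - real N * pn\<bar> / real n"
      using nr by (simp add: abs_mult)
    also have "\<dots> \<le> (e * real n / 8) / real n" using HS nr by (intro divide_right_mono) auto
    also have "\<dots> = e / 8" using nr by simp
    finally show ?thesis .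
  qed
  have Nn: "real N / real n \<le> C" using NC nr by (simp add: field_simps)
  have b2: "\<bar>(real N / real n) * (pn - p)\<bar> \<le> e / 8"
  proof -
    have "\<bar>(real N / real n) * (pn - p)\<bar> = (real N / real n) * \<bar>pn - p\<bar>" by (simp add: abs_mult)
    also have "\<dots> \<le> C * \<bar>pn - p\<bar>" using Nn by (intro mult_right_mono) auto
    finally show ?thesis using pc by (simp add: mult.commute)
  qed
  have lo: "real N / real n \<ge> lam * t - lam * ep - 1 / real n"
  proof -
    have "lam * t - lam * ep - 1 / real n = (lam * (real n * t - real n * ep) - 1) / real n"
      using nr by (simp add: field_simps)
    also have "\<dots> \<le> real N / real n" using Nlo nr by (intro divide_right_mono) auto
    finally show ?thesis .
  qed
  have hi: "real N / real n \<le> lam * t + lam * ep"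
  proof -
    have "real N / real n \<le> lam * (real n * t + real n * ep) / real n" using Nhi nr by (intro divide_right_mono) auto
    also have "\<dots> = lam * t + lam * ep" using nr by (simp add: field_simps)
    finally show ?thesis .
  qed
  have b3': "\<bar>real N / real n - lam * t\<bar> \<le> e / 4" unfolding abs_le_iff using lo hi lep ninv by linarith
  have b3: "\<bar>p * (real N / real n - lam * t)\<bar> \<le> e / 4"
  proof -
    have "\<bar>p * (real N / real n - lam * t)\<bar> = p * \<bar>real N / real n - lam * t\<bar>" using p by (simp add: abs_mult)
    also have "\<dots> \<le> 1 * \<bar>real N / real n - lam * t\<bar>" using p by (intro mult_right_mono) auto
    finally show ?thesis using b3' by simp
  qed
  define A1 where "A1 = (1 / real n) * (Sx - real N * pn)"
  define A2 where "A2 = (real N / real n) * (pn - p)"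
  define A3 where "A3 = p * (real N / real n - lam * t)"
  have t1: "\<bar>A1 + A2 + A3\<bar> \<le> \<bar>A1 + A2\<bar> + \<bar>A3\<bar>" by (rule abs_triangle_ineq)
  have t2: "\<bar>A1 + A2\<bar> \<le> \<bar>A1\<bar> + \<bar>A2\<bar>" by (rule abs_triangle_ineq)
  have "\<bar>A1 + A2 + A3\<bar> \<le> e / 2" using t1 t2 b1 b2 b3 unfolding A1_def A2_def A3_def by linarith
  then show ?thesis unfolding eq A1_def A2_def A3_def .
qed



lemma lim_nexp:
  fixes al K :: real assumes "al > 0"
  shows "(\<lambda>n::nat. K * real n * exp (- al * real n)) \<longlonglongrightarrow> 0"
  using assms by real_asymp

lemma (in prob_space) trunc_exists:
  fixes U :: "'a \<Rightarrow> real" and b :: real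
  assumes U[measurable]: "U \<in> borel_measurable M" and int: "integrable M U" and b: "b > 0"
  shows "\<exists>c>0. expectation U - expectation (\<lambda>w. min (U w) c) \<le> b"
proof -
  have lim: "(\<lambda>j::nat. expectation (\<lambda>w. min (U w) (real j))) \<longlonglongrightarrow> expectation U"
  proof (rule integral_dominated_convergence[where w="\<lambda>w. norm (U w)"])
    show "integrable M (\<lambda>w. norm (U w))" using int by simp
    show "AE w in M. (\<lambda>j. min (U w) (real j)) \<longlonglongrightarrow> U w"
    proof (rule AE_I2)
      fix w
      have "eventually (\<lambda>j. min (U w) (real j) = U w) sequentially"
        using eventually_ge_at_top[of "nat \<lceil>U w\<rceil>"]
        by eventually_elim (simp add: nat_ceiling_le_eq min_def)
      then show "(\<lambda>j. min (U w) (real j)) \<longlonglongrightarrow> U w" by (rule tendsto_eventually)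
    qed
    show "AE w in M. norm (min (U w) (real j)) \<le> norm (U w)" for j
      by (intro AE_I2) auto
  qed auto
  then have "eventually (\<lambda>j. dist (expectation (\<lambda>w. min (U w) (real j))) (expectation U) < b) sequentially"
    using b by (rule tendstoD)
  moreover have "eventually (\<lambda>j::nat. j \<ge> 1) sequentially" by (rule eventually_ge_at_top)
  ultimately obtain j :: nat where j: "j \<ge> 1" "dist (expectation (\<lambda>w. min (U w) (real j))) (expectation U) < b"
    by (metis (mono_tags, lifting) eventually_at_top_linorder order_refl eventually_conj_iff)
  then show ?thesis by (intro exI[of _ "real j"]) (auto simp: dist_real_def)
qed



lemma (in prob_space) expectation_ident:
  fixes Z :: "nat \<Rightarrow> 'a \<Rightarrow> real" and f :: "real \<Rightarrow> real"
  assumes Z: "\<And>i. Z i \<in> borel_measurable M" and ident: "distr M borel (Z i) = distr M borel (Z 0)"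
    and f: "f \<in> borel_measurable borel"
  shows "expectation (\<lambda>w. f (Z i w)) = expectation (\<lambda>w. f (Z 0 w))"
proof -
  have "expectation (\<lambda>w. f (Z i w)) = integral\<^sup>L (distr M borel (Z i)) f"
    using Z f by (simp add: integral_distr)
  also have "\<dots> = integral\<^sup>L (distr M borel (Z 0)) f" using ident by simp
  also have "\<dots> = expectation (\<lambda>w. f (Z 0 w))" using Z f by (simp add: integral_distr)
  finally show ?thesis .
qed

lemma (in prob_space) ident_compose:
  fixes Z :: "nat \<Rightarrow> 'a \<Rightarrow> real" and f :: "real \<Rightarrow> real"
  assumes Z: "\<And>i. Z i \<in> borel_measurable M" and ident: "distr M borel (Z i) = distr M borel (Z 0)"
    and f: "f \<in> borel_measurable borel"
  shows "distr M borel (\<lambda>w. f (Z i w)) = distr M borel (\<lambda>w. f (Z 0 w))"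
proof -
  have "distr M borel (\<lambda>w. f (Z i w)) = distr (distr M borel (Z i)) borel f"
    using Z f by (simp add: distr_distr comp_def)
  also have "\<dots> = distr (distr M borel (Z 0)) borel f" using ident by simp
  also have "\<dots> = distr M borel (\<lambda>w. f (Z 0 w))" using Z f by (simp add: distr_distr comp_def)
  finally show ?thesis .
qed

lemma lim_exp_form:
  fixes C :: nat and del c :: real
  assumes C: "C > 0" and del: "del > 0" and c: "c > 0"
  shows "(\<lambda>n::nat. 2 * real (C * n) * exp (-2 * (del * real n)\<^sup>2 / (real (C * n) * c\<^sup>2))) \<longlonglongrightarrow> 0"
proof -
  define al where "al = 2 * del\<^sup>2 / (real C * c\<^sup>2)"
  have al: "al > 0" unfolding al_def using C del c by simp
  have lim: "(\<lambda>n::nat. (2 * real C) * real n * exp (- al * real n)) \<longlonglongrightarrow> 0"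
    by (rule lim_nexp[OF al])
  have ev: "eventually (\<lambda>n. (2 * real C) * real n * exp (- al * real n) =
       2 * real (C * n) * exp (-2 * (del * real n)\<^sup>2 / (real (C * n) * c\<^sup>2))) sequentially"
    using eventually_ge_at_top[of "1::nat"]
  proof eventually_elim
    case (elim n)
    have "-2 * (del * real n)\<^sup>2 / (real (C * n) * c\<^sup>2) = - al * real n"
      unfolding al_def using elim C c by (simp add: power2_eq_square field_simps)
    then show ?case by simp
  qed
  show ?thesis using Lim_transform_eventually[OF lim ev] .
qed


lemma (in prob_space) per_k:
  fixes u :: "nat \<Rightarrow> 'a \<Rightarrow> real" and X :: "nat \<Rightarrow> nat \<Rightarrow> 'a \<Rightarrow> real"
    and lam p T e d :: real
  assumes u_meas: "\<And>i. u i \<in> borel_measurable M"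
    and u_pos: "\<And>i w. w \<in> space M \<Longrightarrow> u i w > 0"
    and u_indep: "indep_vars (\<lambda>_. borel) u UNIV"
    and u_ident: "\<And>i. distr M borel (u i) = distr M borel (u 0)"
    and u_int: "integrable M (u 0)" and u_mean: "expectation (u 0) = 1 / lam"
    and lam: "lam > 0"
    and X_indep: "\<And>n. indep_vars (\<lambda>_. borel) (X n) UNIV"
    and X_ident: "\<And>n i. distr M borel (X n i) = distr M borel (X n 0)"
    and X_bnd: "\<And>n i w. w \<in> space M \<Longrightarrow> X n i w \<in> {0..1}"
    and X_lim: "(\<lambda>n. expectation (X n 0)) \<longlonglongrightarrow> p"
    and T: "T > 0" and e: "e > 0" and d: "d > 0"
  shows "\<forall>\<^sub>F n in sequentially. \<exists>B\<in>sets M. prob B \<le> d \<and>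
     (\<forall>w\<in>space M - B. \<forall>s t. 0 \<le> s \<longrightarrow> s \<le> t \<longrightarrow> t \<le> T \<longrightarrow>
        \<bar>((1 / real n) * (\<Sum>i<renewal_count (\<lambda>i. u i w) (real n * t). X n i w)
          - (1 / real n) * (\<Sum>i<renewal_count (\<lambda>i. u i w) (real n * s). X n i w))
         - (lam * t - lam * s) * p\<bar> \<le> e)"
proof -
  have X_meas[measurable]: "X n i \<in> borel_measurable M" for n i
    using X_indep[of n] unfolding indep_vars_def by auto
  note u_meas[measurable]
  have pn01: "expectation (X n 0) \<in> {0..1}" for n
  proof -
    have "expectation (X n 0) \<ge> 0" using X_bnd by (intro integral_nonneg_AE AE_I2) auto
    moreover have "expectation (X n 0) \<le> expectation (\<lambda>_. 1::real)"
      using X_bnd by (intro integral_mono_AE' AE_I2) (auto intro!: integrable_const_bound[where B=1])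
    ultimately show ?thesis by (simp add: prob_space)
  qed
  have p0: "0 \<le> p" using X_lim pn01 by (intro LIMSEQ_le_const[OF X_lim]) auto
  have p1: "p \<le> 1" using X_lim pn01 by (intro LIMSEQ_le_const2[OF X_lim]) auto
  define ep where "ep = min 1 (e / (8 * lam))"
  have ep: "ep > 0" "ep \<le> 1" "lam * ep \<le> e / 8"
    using e lam unfolding ep_def by (auto simp: min_def field_simps)
  define C where "C = nat \<lceil>lam * (T + 1)\<rceil> + 1"
  have C: "real C > lam * (T + 1)" "C > 0" unfolding C_def by linarith+
  define be where "be = min (ep / (3 * real C)) (ep * d / (6 * real C))"
  have be: "be > 0" unfolding be_def using ep d C by auto
  obtain c where c: "c > 0" and trunc: "expectation (u 0) - expectation (\<lambda>w. min (u 0 w) c) \<le> be"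
    using trunc_exists[OF u_meas u_int be] by blast
  define v where "v i w = min (u i w) c" for i w
  have v_meas[measurable]: "v i \<in> borel_measurable M" for i unfolding v_def by measurable
  define mu where "mu = expectation (v 0)"
  define ec where "ec = 1 / lam - mu"
  have ec_le: "ec \<le> be" using trunc u_mean unfolding ec_def mu_def v_def by simp
  have Cec1: "real C * ec \<le> ep / 3"
  proof -
    have "real C * ec \<le> real C * (ep / (3 * real C))" using ec_le C by (intro mult_left_mono) (auto simp: be_def)
    also have "\<dots> = ep / 3" using C by simp
    finally show ?thesis .
  qed
  have Cec2: "real C * ec * 3 / ep \<le> d / 2"
  proof -
    have "real C * ec \<le> real C * (ep * d / (6 * real C))" using ec_le C by (intro mult_left_mono) (auto simp: be_def)
    also have "\<dots> = ep * d / 6" using C by simp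
    finally have "real C * ec \<le> ep * d / 6" .
    then show ?thesis using ep by (simp add: field_simps)
  qed
  have w_int: "integrable M (\<lambda>w. u i w - v i w)" for i
  proof -
    have "integrable M (u i)"
    proof -
      have "integrable (distr M borel (u 0)) (\<lambda>x. x)" using u_int by (subst integrable_distr_eq) auto
      then have "integrable (distr M borel (u i)) (\<lambda>x. x)" using u_ident[of i] by simp
      then show ?thesis by (subst (asm) integrable_distr_eq) auto
    qed
    moreover have "integrable M (v i)"
      unfolding v_def using u_pos c
      by (intro integrable_const_bound[where B=c] AE_I2) (auto simp: min_def less_imp_le)
    ultimately show ?thesis by simp
  qed
  have w_exp: "expectation (\<lambda>w. u i w - v i w) = ec" for i
  proof -
    have "expectation (\<lambda>w. u i w - v i w) = expectation (\<lambda>w. (\<lambda>x. x - min x c) (u i w))"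
      unfolding v_def by simp
    also have "\<dots> = expectation (\<lambda>w. (\<lambda>x. x - min x c) (u 0 w))"
      by (rule expectation_ident[where Z=u, OF u_meas u_ident]) measurable
    also have "\<dots> = expectation (u 0) - mu"
      unfolding mu_def v_def using w_int[of 0] u_int unfolding v_def
      by (subst Bochner_Integration.integral_diff[symmetric]) auto
    finally show ?thesis unfolding ec_def u_mean .
  qed
  have w_nonneg: "u i w - v i w \<ge> 0" for i w unfolding v_def by simp
  have ec0: "ec \<ge> 0" unfolding w_exp[of 0, symmetric] using w_nonneg by (intro integral_nonneg_AE AE_I2) auto
  have v_bnd: "v i w \<in> {0..c}" if "w \<in> space M" for i w
    using u_pos[OF that, of i] c unfolding v_def by (auto simp: min_def)
  have v_indep: "indep_vars (\<lambda>_. borel) v UNIV"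
    unfolding v_def by (rule indep_vars_compose2[where X=u, OF u_indep]) measurable
  have v_ident: "distr M borel (v i) = distr M borel (v 0)" for i
    unfolding v_def by (rule ident_compose[where Z=u, OF u_meas u_ident]) measurable
  define V where "V n = {w\<in>space M. \<exists>m\<le>C*n. (ep/3) * real n \<le> \<bar>(\<Sum>i<m. v i w) - real m * expectation (v 0)\<bar>}" for n
  define W where "W n = {w\<in>space M. (ep/3) * real n \<le> (\<Sum>i<C*n. u i w - v i w)}" for n
  define H where "H n = {w\<in>space M. \<exists>m\<le>C*n. (e/8) * real n \<le> \<bar>(\<Sum>i<m. X n i w) - real m * expectation (X n 0)\<bar>}" for n
  have V_sets: "V n \<in> sets M" for n unfolding V_def by measurable
  have W_sets: "W n \<in> sets M" for n unfolding W_def by measurable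
  have H_sets: "H n \<in> sets M" for n unfolding H_def by measurable
  have probV: "prob (V n) \<le> 2 * real (C * n) * exp (-2 * ((ep/3) * real n)\<^sup>2 / (real (C * n) * c\<^sup>2))" if n: "n > 0" for n
    unfolding V_def using n ep C
    by (intro unif_hoeffding[OF v_indep v_ident v_bnd c]) auto
  have probH: "prob (H n) \<le> 2 * real (C * n) * exp (-2 * ((e/8) * real n)\<^sup>2 / (real (C * n) * 1\<^sup>2))" if n: "n > 0" for n
    unfolding H_def using n e C
    by (intro unif_hoeffding[OF X_indep X_ident X_bnd]) auto
  have probW: "prob (W n) \<le> d / 2" if n: "n > 0" for n
  proof -
    have "prob (W n) \<le> expectation (\<lambda>w. \<Sum>i<C*n. u i w - v i w) / ((ep/3) * real n)"
      unfolding W_def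
      by (rule integral_Markov_inequality_measure[where A="space M"]) (use w_int w_nonneg ep n in \<open>auto intro!: sum_nonneg\<close>)
    also have "expectation (\<lambda>w. \<Sum>i<C*n. u i w - v i w) = real (C * n) * ec"
      using w_int by (subst Bochner_Integration.integral_sum) (auto simp: w_exp)
    also have "real (C * n) * ec / ((ep/3) * real n) = real C * ec * 3 / ep"
      using n ep by (simp add: field_simps)
    finally show ?thesis using Cec2 by linarith
  qed
  have ev1: "eventually (\<lambda>n. 2 * real (C * n) * exp (-2 * ((ep/3) * real n)\<^sup>2 / (real (C * n) * c\<^sup>2)) < d / 4) sequentially"
    using lim_exp_form[of C "ep/3" c] C ep c d by (intro order_tendstoD(2)) auto
  have ev2: "eventually (\<lambda>n. 2 * real (C * n) * exp (-2 * ((e/8) * real n)\<^sup>2 / (real (C * n) * 1\<^sup>2)) < d / 4) sequentially"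
    using lim_exp_form[of C "e/8" 1] C e d by (intro order_tendstoD(2)) auto
  have ev3: "eventually (\<lambda>n. dist (expectation (X n 0)) p < e / (8 * real C)) sequentially"
    using X_lim e C by (intro tendstoD) auto
  have ev4: "eventually (\<lambda>n. 1 / real n \<le> e / 8) sequentially"
  proof -
    have "((\<lambda>n. 1 / real n) \<longlongrightarrow> 0) sequentially" by (rule lim_const_over_n)
    then have "eventually (\<lambda>n. 1 / real n < e / 8) sequentially" using e by (intro order_tendstoD(2)) auto
    then show ?thesis by eventually_elim simp
  qed
  have ev5: "eventually (\<lambda>n::nat. n \<ge> 1) sequentially" by (rule eventually_ge_at_top)
  show ?thesis
    using ev1 ev2 ev3 ev4 ev5
  proof eventually_elim
    case (elim n)
    have n: "n > 0" using elim by simp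
    define B where "B = V n \<union> W n \<union> H n"
    have B_sets: "B \<in> sets M" unfolding B_def using V_sets W_sets H_sets by auto
    have "prob B \<le> prob (V n) + prob (W n) + prob (H n)"
      unfolding B_def using V_sets W_sets H_sets
      using measure_Un_le[of "V n \<union> W n" M "H n"] measure_Un_le[of "V n" M "W n"] by auto
    also have "\<dots> \<le> d / 4 + d / 2 + d / 4"
      using probV[OF n] probW[OF n] probH[OF n] elim by linarith
    finally have probB: "prob B \<le> d" by simp
    have good: "\<bar>(1 / real n) * (\<Sum>i<renewal_count (\<lambda>i. u i w) (real n * t). X n i w) - lam * t * p\<bar> \<le> e / 2"
      if w: "w \<in> space M - B" and t: "0 \<le> t" "t \<le> T" for w t
    proof -
      have wsp: "w \<in> space M" using w by simp
      have notV: "\<forall>m\<le>C*n. \<bar>(\<Sum>i<m. v i w) - real m * mu\<bar> < (ep/3) * real n"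
      proof (intro allI impI)
        fix m assume m: "m \<le> C * n"
        have "w \<notin> V n" using w unfolding B_def by simp
        then have "\<not> ((ep/3) * real n \<le> \<bar>(\<Sum>i<m. v i w) - real m * mu\<bar>)"
          using m wsp unfolding V_def mu_def by blast
        then show "\<bar>(\<Sum>i<m. v i w) - real m * mu\<bar> < (ep/3) * real n" by simp
      qed
      have notW: "(\<Sum>i<C*n. u i w - v i w) < (ep/3) * real n"
      proof -
        have "w \<notin> W n" using w unfolding B_def by simp
        then show ?thesis using wsp unfolding W_def by simp
      qed
      have notH: "\<forall>m\<le>C*n. \<bar>(\<Sum>i<m. X n i w) - real m * expectation (X n 0)\<bar> < (e/8) * real n"
      proof (intro allI impI)
        fix m assume m: "m \<le> C * n"
        have "w \<notin> H n" using w unfolding B_def by simp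
        then have "\<not> ((e/8) * real n \<le> \<bar>(\<Sum>i<m. X n i w) - real m * expectation (X n 0)\<bar>)"
          using m wsp unfolding H_def by blast
        then show "\<bar>(\<Sum>i<m. X n i w) - real m * expectation (X n 0)\<bar> < (e/8) * real n" by simp
      qed
      have R: "\<forall>m\<le>C * n. \<bar>(\<Sum>i<m. u i w) - real m / lam\<bar> \<le> real n * ep"
      proof (intro allI impI)
        fix m assume m: "m \<le> C * n"
        have sw: "(\<Sum>i<m. u i w - v i w) \<le> (\<Sum>i<C*n. u i w - v i w)"
          using m w_nonneg by (intro sum_mono2) auto
        have sw0: "(\<Sum>i<m. u i w - v i w) \<ge> 0" using w_nonneg by (intro sum_nonneg) auto
        have mec: "real m * ec \<le> real n * (ep / 3)"
        proof -
          have "real m * ec \<le> real (C * n) * ec"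
            using m ec0 by (intro mult_right_mono) (auto simp flip: of_nat_mult)
          also have "\<dots> = real n * (real C * ec)" by simp
          also have "\<dots> \<le> real n * (ep / 3)" using Cec1 by (intro mult_left_mono) auto
          finally show ?thesis .
        qed
        have split: "(\<Sum>i<m. u i w) - real m / lam = ((\<Sum>i<m. v i w) - real m * mu) + (\<Sum>i<m. u i w - v i w) - real m * ec"
          unfolding ec_def by (simp add: sum_subtractf algebra_simps)
        show "\<bar>(\<Sum>i<m. u i w) - real m / lam\<bar> \<le> real n * ep"
        proof -
          have a: "\<bar>(\<Sum>i<m. v i w) - real m * mu\<bar> < (ep/3) * real n" using notV m by blast
          have eq3: "real n * ep = 3 * ((ep/3) * real n)" by simp
          have "real m * ec \<ge> 0" using ec0 by simp
          then show ?thesis unfolding split using a sw sw0 mec notW \<open>real m * ec \<ge> 0\<close> by (simp only: abs_le_iff abs_less_iff) (use eq3 in linarith)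
        qed
      qed
      define N where "N = renewal_count (\<lambda>i. u i w) (real n * t)"
      have upos: "\<And>i. u i w \<ge> 0" using u_pos[OF wsp] by (simp add: less_imp_le)
      have x: "0 \<le> real n * t" "real n * t \<le> real n * T" using t by (auto intro: mult_left_mono)
      have Nlo: "lam * (real n * t - real n * ep) - 1 \<le> real N"
        unfolding N_def by (rule count_bounds(1)[OF upos lam x ep(1) ep(2) n C(1) R])
      have Nhi: "real N \<le> lam * (real n * t + real n * ep)"
        unfolding N_def by (rule count_bounds(2)[OF upos lam x ep(1) ep(2) n C(1) R])
      have NC: "real N \<le> real C * real n"
      proof -
        have "lam * (real n * t + real n * ep) \<le> lam * (real n * (T + 1))"
        proof (intro mult_left_mono)
          have "real n * ep \<le> real n * 1" using ep by (intro mult_left_mono) auto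
          moreover have "real n * t \<le> real n * T" using t by (intro mult_left_mono) auto
          ultimately show "real n * t + real n * ep \<le> real n * (T + 1)" by (simp add: algebra_simps)
        qed (use lam in simp)
        also have "\<dots> = real n * (lam * (T + 1))" by simp
        also have "\<dots> \<le> real n * real C" using C by (intro mult_left_mono) auto
        finally show ?thesis using Nhi by (simp add: mult.commute)
      qed
      have NCn: "N \<le> C * n" using NC by (simp flip: of_nat_mult)
      have HS: "\<bar>(\<Sum>i<N. X n i w) - real N * expectation (X n 0)\<bar> \<le> e * real n / 8"
        using notH NCn by fastforce
      have pc: "\<bar>expectation (X n 0) - p\<bar> * real C \<le> e / 8"
      proof -
        have "\<bar>expectation (X n 0) - p\<bar> < e / (8 * real C)" using elim by (simp add: dist_real_def)
        then have "\<bar>expectation (X n 0) - p\<bar> * real C < e / (8 * real C) * real C"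
          using C by (intro mult_strict_right_mono) auto
        also have "\<dots> = e / 8" using C by simp
        finally show ?thesis by simp
      qed
      show ?thesis unfolding N_def[symmetric]
        by (rule combine_bound[OF n p0 p1 HS NC pc Nlo Nhi ep(3)]) (use elim in simp)
    qed
    show ?case
    proof (intro bexI[of _ B] conjI ballI allI impI)
      show "B \<in> sets M" by (rule B_sets)
      show "prob B \<le> d" by (rule probB)
      fix w s t assume w: "w \<in> space M - B" and st: "0 \<le> s" "s \<le> t" "t \<le> T"
      define a1 where "a1 = (1 / real n) * (\<Sum>i<renewal_count (\<lambda>i. u i w) (real n * t). X n i w)"
      define a2 where "a2 = (1 / real n) * (\<Sum>i<renewal_count (\<lambda>i. u i w) (real n * s). X n i w)"
      have g1: "\<bar>a1 - lam * t * p\<bar> \<le> e / 2" unfolding a1_def using good[OF w] st by simp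
      have g2: "\<bar>a2 - lam * s * p\<bar> \<le> e / 2" unfolding a2_def using good[OF w] st by simp
      have "(a1 - a2) - (lam * t - lam * s) * p = (a1 - lam * t * p) - (a2 - lam * s * p)"
        by (simp add: algebra_simps)
      then have "\<bar>(a1 - a2) - (lam * t - lam * s) * p\<bar> \<le> e"
        using g1 g2 abs_triangle_ineq4[of "a1 - lam * t * p" "a2 - lam * s * p"] by linarith
      then show "\<bar>((1 / real n) * (\<Sum>i<renewal_count (\<lambda>i. u i w) (real n * t). X n i w)
          - (1 / real n) * (\<Sum>i<renewal_count (\<lambda>i. u i w) (real n * s). X n i w))
         - (lam * t - lam * s) * p\<bar> \<le> e" unfolding a1_def a2_def .
    qed
  qed
qed


lemma weak_interval:
  fixes mu :: "nat \<Rightarrow> real measure" and M0 :: "real measure" and a b :: real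
  assumes mu: "\<And>n. real_distribution (mu n)" and M0: "real_distribution M0"
    and wc: "weak_conv_m mu M0" and atom: "\<And>x. measure M0 {x} = 0" and ab: "a \<le> b"
  shows "(\<lambda>n. measure (mu n) {a<..<b}) \<longlonglongrightarrow> measure M0 {a<..<b}"
proof (cases "a = b")
  case True then show ?thesis by simp
next
  case False
  then have ab': "a < b" using ab by simp
  interpret M0: real_distribution M0 by (rule M0)
  have conv: "(\<lambda>n. cdf (mu n) x) \<longlonglongrightarrow> cdf M0 x" for x
    using wc atom M0.isCont_cdf unfolding weak_conv_m_def weak_conv_def by blast
  have split: "measure N {a<..<b} = measure N {..<b} - cdf N a" if N: "real_distribution N" for N
  proof -
    interpret N: real_distribution N by (rule N)
    have "{a<..<b} = {..<b} - {..a}" by auto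
    moreover have "measure N ({..<b} - {..a}) = measure N {..<b} - measure N {..a}"
      using ab' by (intro N.finite_measure_Diff) auto
    ultimately show ?thesis by (simp add: cdf_def)
  qed
  have M0b: "cdf M0 b = measure M0 {..<b}"
  proof -
    have "measure M0 ({..<b} \<union> {b}) = measure M0 {..<b} + measure M0 {b}"
      by (rule M0.finite_measure_Union) auto
    moreover have "{..<b} \<union> {b} = {..b}" by auto
    ultimately have "measure M0 {..b} = measure M0 {..<b} + measure M0 {b}" by simp
    then show ?thesis using atom by (simp add: cdf_def)
  qed
  have lim_b: "(\<lambda>n. measure (mu n) {..<b}) \<longlonglongrightarrow> measure M0 {..<b}"
  proof (rule order_tendstoI)
    fix y assume y: "y > measure M0 {..<b}"
    have "eventually (\<lambda>n. cdf (mu n) b < y) sequentially"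
      using conv[of b] y M0b by (intro order_tendstoD(2)) auto
    then show "eventually (\<lambda>n. measure (mu n) {..<b} < y) sequentially"
    proof eventually_elim
      case (elim n)
      interpret N: real_distribution "mu n" by (rule mu)
      have "measure (mu n) {..<b} \<le> cdf (mu n) b"
        unfolding cdf_def by (intro N.finite_measure_mono) auto
      then show ?case using elim by simp
    qed
  next
    fix y assume y: "y < measure M0 {..<b}"
    have "eventually (\<lambda>x. y < cdf M0 x) (at_left b)"
      using M0.cdf_at_left y by (intro order_tendstoD(1)) auto
    then obtain z where z: "z < b" "\<forall>x. z < x \<and> x < b \<longrightarrow> y < cdf M0 x"
      unfolding eventually_at_left_field by blast
    define x where "x = (z + b) / 2"
    have x: "z < x" "x < b" unfolding x_def using z by auto
    have "y < cdf M0 x" using z x by blast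
    then have "eventually (\<lambda>n. y < cdf (mu n) x) sequentially"
      using conv[of x] by (intro order_tendstoD(1)) auto
    then show "eventually (\<lambda>n. y < measure (mu n) {..<b}) sequentially"
    proof eventually_elim
      case (elim n)
      interpret N: real_distribution "mu n" by (rule mu)
      have "cdf (mu n) x \<le> measure (mu n) {..<b}"
        unfolding cdf_def using x by (intro N.finite_measure_mono) auto
      then show ?case using elim by simp
    qed
  qed
  have "(\<lambda>n. measure (mu n) {..<b} - cdf (mu n) a) \<longlonglongrightarrow> measure M0 {..<b} - cdf M0 a"
    by (intro tendsto_diff lim_b conv)
  then show ?thesis using split[OF mu] split[OF M0] by simp
qed



lemma (in prob_space) indep_vars_reindex_inj:
  assumes ind: "indep_vars M' X (f ` J)" and inj: "inj_on f J"
  shows "indep_vars (\<lambda>j. M' (f j)) (\<lambda>j. X (f j)) J"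
proof -
  have rv: "\<forall>i\<in>f ` J. random_variable (M' i) (X i)"
    and iss: "indep_sets (\<lambda>i. {X i -` A \<inter> space M | A. A \<in> sets (M' i)}) (f ` J)"
    using ind unfolding indep_vars_def2 by auto
  define F where "F i = {X i -` A \<inter> space M | A. A \<in> sets (M' i)}" for i
  have Fev: "\<forall>i\<in>f ` J. F i \<subseteq> events"
    and Fprod: "\<And>J'. J' \<subseteq> f ` J \<Longrightarrow> J' \<noteq> {} \<Longrightarrow> finite J' \<Longrightarrow> (\<forall>A\<in>Pi J' F. prob (\<Inter>j\<in>J'. A j) = (\<Prod>j\<in>J'. prob (A j)))"
    using iss unfolding indep_sets_def F_def by auto
  show ?thesis
    unfolding indep_vars_def2
  proof (intro conjI)
    show "\<forall>j\<in>J. random_variable (M' (f j)) (X (f j))" using rv by auto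
    show "indep_sets (\<lambda>j. {X (f j) -` A \<inter> space M | A. A \<in> sets (M' (f j))}) J"
      unfolding indep_sets_def
    proof (intro conjI ballI allI impI)
      fix j assume "j \<in> J" then show "{X (f j) -` A \<inter> space M | A. A \<in> sets (M' (f j))} \<subseteq> events"
        using Fev unfolding F_def by auto
    next
      fix J' A assume J': "J' \<subseteq> J" "J' \<noteq> {}" "finite J'"
        and A: "A \<in> Pi J' (\<lambda>j. {X (f j) -` A \<inter> space M | A. A \<in> sets (M' (f j))})"
      have inj': "inj_on f J'" using inj J'(1) by (rule inj_on_subset)
      define A' where "A' i = A (the_inv_into J' f i)" for i
      have A'f: "A' (f j) = A j" if "j \<in> J'" for j
        unfolding A'_def using the_inv_into_f_f[OF inj' that] by simp
      have "A' \<in> Pi (f ` J') F"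
      proof
        fix i assume "i \<in> f ` J'"
        then obtain j where j: "j \<in> J'" "i = f j" by blast
        then have "A j \<in> {X (f j) -` A \<inter> space M | A. A \<in> sets (M' (f j))}" using A by blast
        then show "A' i \<in> F i" using A'f[OF j(1)] j(2) unfolding F_def by simp
      qed
      then have "prob (\<Inter>i\<in>f ` J'. A' i) = (\<Prod>i\<in>f ` J'. prob (A' i))"
        using Fprod[of "f ` J'"] J' by auto
      moreover have "(\<Inter>i\<in>f ` J'. A' i) = (\<Inter>j\<in>J'. A j)" using A'f by auto
      moreover have "(\<Prod>i\<in>f ` J'. prob (A' i)) = (\<Prod>j\<in>J'. prob (A j))"
        using A'f by (simp add: prod.reindex[OF inj'])
      ultimately show "prob (\<Inter>j\<in>J'. A j) = (\<Prod>j\<in>J'. prob (A j))" by simp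
    qed
  qed
qed



theorem corollary5p1:
  fixes M :: "'a measure" and K :: nat and lam :: "nat \<Rightarrow> real"
    and u :: "nat \<Rightarrow> nat \<Rightarrow> 'a \<Rightarrow> real"
    and g :: "nat \<Rightarrow> nat \<Rightarrow> nat \<Rightarrow> 'a \<Rightarrow> real"
    and Gn :: "nat \<Rightarrow> nat \<Rightarrow> real measure" and Gam :: "nat \<Rightarrow> real measure"
    and T eps eta a b :: real
  assumes P: "prob_space M"
    and lam_pos: "\<forall>k\<in>{1..K}. lam k > 0"
    and u_meas: "\<forall>k\<in>{1..K}. \<forall>i. u k i \<in> borel_measurable M"
    and u_pos: "\<forall>k\<in>{1..K}. \<forall>i. \<forall>\<omega>\<in>space M. u k i \<omega> > 0"
    and u_indep: "\<forall>k\<in>{1..K}. prob_space.indep_vars M (\<lambda>_. borel) (u k) UNIV"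
    and u_ident: "\<forall>k\<in>{1..K}. \<forall>i. distr M borel (u k i) = distr M borel (u k 0)"
    and u_mean: "\<forall>k\<in>{1..K}. integrable M (u k 0) \<and> integral\<^sup>L M (u k 0) = 1 / lam k"
    and g_meas: "\<forall>n. \<forall>k\<in>{1..K}. \<forall>i. g n k i \<in> borel_measurable M"
    and g_pos: "\<forall>n. \<forall>k\<in>{1..K}. \<forall>i. \<forall>\<omega>\<in>space M. g n k i \<omega> > 0"
    and g_indep: "\<forall>n. prob_space.indep_vars M (\<lambda>_. borel) (\<lambda>p. g n (fst p) (snd p)) ({1..K} \<times> UNIV)"
    and g_distr: "\<forall>n. \<forall>k\<in>{1..K}. \<forall>i. distr M borel (g n k i) = Gn n k"
    and g_arr_indep: "\<forall>n. prob_space.indep_var M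
        (PiM ({1..K} \<times> UNIV) (\<lambda>_. borel)) (\<lambda>\<omega>. \<lambda>p\<in>{1..K} \<times> UNIV. g n (fst p) (snd p) \<omega>)
        (PiM ({1..K} \<times> UNIV) (\<lambda>_. borel)) (\<lambda>\<omega>. \<lambda>p\<in>{1..K} \<times> UNIV. u (fst p) (snd p) \<omega>)"
    and Gn_mean: "\<forall>n. \<forall>k\<in>{1..K}. integrable (Gn n k) (\<lambda>x. x)"
    and Gn_UI: "\<forall>k\<in>{1..K}.
        ((\<lambda>m::real. SUP n. ereal (set_lebesgue_integral (Gn n k) {m<..} (\<lambda>x. x))) \<longlongrightarrow> (0::ereal)) at_top"
    and Gn_weak: "\<forall>k\<in>{1..K}. weak_conv_m (\<lambda>n. Gn n k) (Gam k)"
    and Gam: "\<forall>k\<in>{1..K}. prob_space (Gam k) \<and> sets (Gam k) = sets borel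
        \<and> measure (Gam k) {..0} = 0 \<and> (\<forall>x. measure (Gam k) {x} = 0)
        \<and> integrable (Gam k) (\<lambda>x. x)"
    and T_pos: "T > 0" and eps_pos: "eps > 0" and eta_pos: "eta > 0"
    and ab: "0 \<le> a" "a \<le> b"
  shows "liminf (\<lambda>n. ereal (measure M {\<omega>\<in>space M. \<forall>k\<in>{1..K}. \<forall>s t. 0 \<le> s \<longrightarrow> s \<le> t \<longrightarrow> t \<le> T \<longrightarrow>
            \<bar>(Gbar n (\<lambda>i. g n k i \<omega>) (renewal_count (\<lambda>i. u k i \<omega>) (real n * t)) {a<..<b}
              - Gbar n (\<lambda>i. g n k i \<omega>) (renewal_count (\<lambda>i. u k i \<omega>) (real n * s)) {a<..<b})
             - (lam k * t - lam k * s) * measure (Gam k) {a<..<b}\<bar> \<le> eps}))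
         \<ge> ereal (1 - eta)"
  proof -
  interpret prob_space M by (rule P)
  define A where "A = {a<..<b}"
  define pk where "pk k = measure (Gam k) A" for k
  define phi where "phi n k w x = Gbar n (\<lambda>i. g n k i w) (renewal_count (\<lambda>i. u k i w) (real n * x)) A" for n k w x
  define Q where "Q n k w s t \<longleftrightarrow> \<bar>(phi n k w t - phi n k w s) - (lam k * t - lam k * s) * pk k\<bar> \<le> eps" for n k w s t
  define Good where "Good n = {w\<in>space M. \<forall>k\<in>{1..K}. \<forall>s t. 0 \<le> s \<longrightarrow> s \<le> t \<longrightarrow> t \<le> T \<longrightarrow> Q n k w s t}" for n
  have goal_eq: "{\<omega>\<in>space M. \<forall>k\<in>{1..K}. \<forall>s t. 0 \<le> s \<longrightarrow> s \<le> t \<longrightarrow> t \<le> T \<longrightarrow>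
            \<bar>(Gbar n (\<lambda>i. g n k i \<omega>) (renewal_count (\<lambda>i. u k i \<omega>) (real n * t)) {a<..<b}
              - Gbar n (\<lambda>i. g n k i \<omega>) (renewal_count (\<lambda>i. u k i \<omega>) (real n * s)) {a<..<b})
             - (lam k * t - lam k * s) * measure (Gam k) {a<..<b}\<bar> \<le> eps} = Good n" for n
    unfolding Good_def Q_def phi_def pk_def A_def ..
  have dmeas0[measurable]: "(\<lambda>x. deltap x A) \<in> borel_measurable borel"
    unfolding deltap_def A_def by measurable
  define rho :: "rat option \<Rightarrow> real" where "rho q = (case q of None \<Rightarrow> T | Some r \<Rightarrow> of_rat r)" for q
  have phi_rc: "\<exists>dd>0. \<forall>y. x \<le> y \<and> y < x + dd \<longrightarrow> phi n k w y = phi n k w x"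
    if w: "w \<in> space M" and k: "k \<in> {1..K}" for n k w x
  proof (cases "n = 0")
    case True then show ?thesis unfolding phi_def by (intro exI[of _ 1]) simp
  next
    case False
    have upos: "0 < u k i w" for i using u_pos k w by blast
    have ex: "\<exists>dd>0. \<forall>y. real n * x \<le> y \<and> y < real n * x + dd \<longrightarrow>
         renewal_count (\<lambda>i. u k i w) y = renewal_count (\<lambda>i. u k i w) (real n * x)"
      by (rule renewal_rconst) (rule less_imp_le[OF upos])
    then obtain dd where
      dd: "dd > 0" "\<forall>y. real n * x \<le> y \<and> y < real n * x + dd \<longrightarrow>
         renewal_count (\<lambda>i. u k i w) y = renewal_count (\<lambda>i. u k i w) (real n * x)" by blast
    have n: "real n > 0" using False by simp
    show ?thesis
    proof (intro exI[of _ "dd / real n"] conjI allI impI)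
      show "dd / real n > 0" using dd n by simp
      fix y assume y: "x \<le> y \<and> y < x + dd / real n"
      have "real n * x \<le> real n * y" using y n by simp
      moreover have "real n * y < real n * x + dd"
      proof -
        have "real n * y < real n * (x + dd / real n)" using y n by simp
        also have "\<dots> = real n * x + dd" using n by (simp add: algebra_simps)
        finally show ?thesis .
      qed
      ultimately have "renewal_count (\<lambda>i. u k i w) (real n * y) = renewal_count (\<lambda>i. u k i w) (real n * x)"
        using dd(2) by blast
      then show "phi n k w y = phi n k w x" unfolding phi_def by simp
    qed
  qed
  have Good_eq: "Good n = {w\<in>space M. \<forall>k\<in>{1..K}. \<forall>q1 q2. 0 \<le> rho q1 \<longrightarrow> rho q1 \<le> rho q2 \<longrightarrow> rho q2 \<le> T \<longrightarrow>
      Q n k w (rho q1) (rho q2)}" for n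
  proof (intro set_eqI iffI)
    fix w assume "w \<in> Good n" then show "w \<in> {w\<in>space M. \<forall>k\<in>{1..K}. \<forall>q1 q2. 0 \<le> rho q1 \<longrightarrow> rho q1 \<le> rho q2 \<longrightarrow> rho q2 \<le> T \<longrightarrow>
      Q n k w (rho q1) (rho q2)}" unfolding Good_def by blast
  next
    fix w assume w: "w \<in> {w\<in>space M. \<forall>k\<in>{1..K}. \<forall>q1 q2. 0 \<le> rho q1 \<longrightarrow> rho q1 \<le> rho q2 \<longrightarrow> rho q2 \<le> T \<longrightarrow>
      Q n k w (rho q1) (rho q2)}"
    have wsp: "w \<in> space M" using w by simp
    have inD: "\<exists>q. rho q = s" if "s \<in> insert T (\<rat> \<inter> {0..T})" for s
    proof (cases "s = T")
      case True then show ?thesis by (intro exI[of _ None]) (simp add: rho_def)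
    next
      case False
      then have "s \<in> \<rat>" using that by auto
      then obtain r where "s = of_rat r" by (auto elim: Rats_cases)
      then show ?thesis by (intro exI[of _ "Some r"]) (simp add: rho_def)
    qed
    have "\<forall>s t. 0 \<le> s \<longrightarrow> s \<le> t \<longrightarrow> t \<le> T \<longrightarrow> Q n k w s t" if k: "k \<in> {1..K}" for k
    proof (intro allI impI)
      fix s t assume st: "0 \<le> s" "s \<le> t" "t \<le> T"
      have H: "\<forall>s\<in>insert T (\<rat> \<inter> {0..T}). \<forall>t\<in>insert T (\<rat> \<inter> {0..T}). s \<le> t \<longrightarrow>
              \<bar>(phi n k w t - phi n k w s) - (lam k * t - lam k * s) * pk k\<bar> \<le> eps"
      proof (intro ballI impI)
        fix s t assume s: "s \<in> insert T (\<rat> \<inter> {0..T})" and t: "t \<in> insert T (\<rat> \<inter> {0..T})" and le: "s \<le> t"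
        obtain q1 where q1: "rho q1 = s" using inD[OF s] by blast
        obtain q2 where q2: "rho q2 = t" using inD[OF t] by blast
        have "0 \<le> s" "t \<le> T" using s t T_pos by auto
        then have "Q n k w (rho q1) (rho q2)" using w k le q1 q2 by blast
        then show "\<bar>(phi n k w t - phi n k w s) - (lam k * t - lam k * s) * pk k\<bar> \<le> eps"
          unfolding Q_def q1 q2 .
      qed
      show "Q n k w s t" unfolding Q_def
        by (rule sup_reduce[OF phi_rc[OF wsp k] H st])
    qed
    then show "w \<in> Good n" unfolding Good_def using wsp by blast
  qed
  have Good_sets: "Good n \<in> sets M" for n
    unfolding Good_eq
  proof (rule sets.sets_Collect_finite_All)
    show "finite {1..K}" by simp
    fix k assume k: "k \<in> {1..K}"
    have g_meas'[measurable]: "g n k i \<in> borel_measurable M" for i using g_meas k by blast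
    have u_meas'[measurable]: "u k i \<in> borel_measurable M" for i using u_meas k by blast
    have phim[measurable]: "(\<lambda>w. phi n k w x) \<in> borel_measurable M" for x
    proof -
      have N: "(\<lambda>w. card {m. 1 \<le> m \<and> (\<Sum>i<m. u k i w) \<le> real n * x}) \<in> measurable M (count_space UNIV)"
        by (rule measurable_card_nat) measurable
      have f: "(\<lambda>w. Gbar n (\<lambda>i. g n k i w) j A) \<in> borel_measurable M" for j
        unfolding Gbar_def by measurable
      show ?thesis unfolding phi_def renewal_count_def
        by (rule measurable_compose_countable[OF f N])
    qed
    show "{w\<in>space M. \<forall>q1 q2. 0 \<le> rho q1 \<longrightarrow> rho q1 \<le> rho q2 \<longrightarrow> rho q2 \<le> T \<longrightarrow> Q n k w (rho q1) (rho q2)} \<in> sets M"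
      unfolding Q_def by measurable
  qed
  define d where "d = eta / (real K + 1)"
  have d: "d > 0" unfolding d_def using eta_pos by simp
  have perk: "eventually (\<lambda>n. \<exists>B\<in>sets M. prob B \<le> d \<and>
      (\<forall>w\<in>space M - B. \<forall>s t. 0 \<le> s \<longrightarrow> s \<le> t \<longrightarrow> t \<le> T \<longrightarrow> Q n k w s t)) sequentially"
    if k: "k \<in> {1..K}" for k
  proof -
    define X where "X n i w = deltap (g n k i w) A" for n i w
    have dmeas[measurable]: "(\<lambda>x. deltap x A) \<in> borel_measurable borel"
      unfolding deltap_def A_def by measurable
    have g_meas'[measurable]: "g n k i \<in> borel_measurable M" for n i using g_meas k by blast
    have u_meas'[measurable]: "u k i \<in> borel_measurable M" for i using u_meas k by blast
    have gk_indep: "indep_vars (\<lambda>_. borel) (g n k) UNIV" for n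
    proof -
      have "indep_vars (\<lambda>_. borel) (\<lambda>p. g n (fst p) (snd p)) ((\<lambda>i. (k, i)) ` UNIV)"
        by (rule indep_vars_subset[OF g_indep[rule_format, of n]]) (use k in auto)
      then have "indep_vars (\<lambda>j. (\<lambda>_. borel) ((\<lambda>i. (k, i)) j)) (\<lambda>j. (\<lambda>p. g n (fst p) (snd p)) ((\<lambda>i. (k, i)) j)) UNIV"
        by (rule indep_vars_reindex_inj) (auto simp: inj_on_def)
      then show ?thesis by simp
    qed
    have X_indep: "indep_vars (\<lambda>_. borel) (X n) UNIV" for n
      unfolding X_def by (rule indep_vars_compose2[where X="g n k", OF gk_indep]) measurable
    have gk_ident: "distr M borel (g n k i) = distr M borel (g n k 0)" for n i
      using g_distr k by auto
    have X_ident: "distr M borel (X n i) = distr M borel (X n 0)" for n i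
      unfolding X_def by (rule ident_compose[where Z="g n k", OF g_meas' gk_ident]) measurable
    have X_bnd: "X n i w \<in> {0..1}" for n i w unfolding X_def deltap_def by auto
    have Gn_rd: "real_distribution (Gn n k)" for n
    proof -
      have "Gn n k = distr M borel (g n k 0)" using g_distr k by auto
      moreover have "real_distribution (distr M borel (g n k 0))"
        unfolding real_distribution_def real_distribution_axioms_def
        by (auto intro!: prob_space_distr)
      ultimately show ?thesis by simp
    qed
    have Gam_rd: "real_distribution (Gam k)"
      using Gam k unfolding real_distribution_def real_distribution_axioms_def by auto
    have Xexp: "expectation (X n 0) = measure (Gn n k) A" for n
    proof -
      have "expectation (X n 0) = integral\<^sup>L (distr M borel (g n k 0)) (\<lambda>x. deltap x A)"
        unfolding X_def by (simp add: integral_distr)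
      also have "\<dots> = integral\<^sup>L (Gn n k) (\<lambda>x. deltap x A)" using g_distr k by auto
      also have "\<dots> = integral\<^sup>L (Gn n k) (indicator A)"
        using ab unfolding deltap_def A_def by (intro Bochner_Integration.integral_cong) (auto simp: indicator_def)
      also have "\<dots> = measure (Gn n k) A"
      proof -
        interpret G: real_distribution "Gn n k" by (rule Gn_rd)
        show ?thesis unfolding A_def by simp
      qed
      finally show ?thesis .
    qed
    have X_lim: "(\<lambda>n. expectation (X n 0)) \<longlonglongrightarrow> pk k"
      unfolding Xexp pk_def A_def
      by (rule weak_interval[OF Gn_rd Gam_rd]) (use Gn_weak Gam k ab in auto)
    have "eventually (\<lambda>n. \<exists>B\<in>sets M. prob B \<le> d \<and>
     (\<forall>w\<in>space M - B. \<forall>s t. 0 \<le> s \<longrightarrow> s \<le> t \<longrightarrow> t \<le> T \<longrightarrow>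
        \<bar>((1 / real n) * (\<Sum>i<renewal_count (\<lambda>i. u k i w) (real n * t). X n i w)
          - (1 / real n) * (\<Sum>i<renewal_count (\<lambda>i. u k i w) (real n * s). X n i w))
         - (lam k * t - lam k * s) * pk k\<bar> \<le> eps)) sequentially"
    proof (rule per_k[OF u_meas'])
      show "\<And>i w. w \<in> space M \<Longrightarrow> 0 < u k i w" using u_pos k by blast
      show "indep_vars (\<lambda>_. borel) (u k) UNIV" using u_indep k by blast
      show "\<And>i. distr M borel (u k i) = distr M borel (u k 0)" using u_ident k by blast
      show "integrable M (u k 0)" using u_mean k by blast
      show "expectation (u k 0) = 1 / lam k" using u_mean k by blast
      show "lam k > 0" using lam_pos k by blast
    qed (use X_indep X_ident X_bnd X_lim T_pos eps_pos d in auto)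
    then show ?thesis unfolding Q_def phi_def Gbar_def X_def by simp
  qed
  have Good_prob: "eventually (\<lambda>n. prob (Good n) \<ge> 1 - eta) sequentially"
  proof -
    have "eventually (\<lambda>n. \<forall>k\<in>{1..K}. \<exists>B\<in>sets M. prob B \<le> d \<and>
      (\<forall>w\<in>space M - B. \<forall>s t. 0 \<le> s \<longrightarrow> s \<le> t \<longrightarrow> t \<le> T \<longrightarrow> Q n k w s t)) sequentially"
      using perk by (intro eventually_ball_finite) auto
    then show ?thesis
    proof eventually_elim
      case (elim n)
      then obtain BB where BB: "\<And>k. k \<in> {1..K} \<Longrightarrow> BB k \<in> sets M \<and> prob (BB k) \<le> d \<and>
          (\<forall>w\<in>space M - BB k. \<forall>s t. 0 \<le> s \<longrightarrow> s \<le> t \<longrightarrow> t \<le> T \<longrightarrow> Q n k w s t)"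
        by metis
      define B where "B = (\<Union>k\<in>{1..K}. BB k)"
      have Bs: "B \<in> sets M" unfolding B_def using BB by auto
      have "prob B \<le> (\<Sum>k\<in>{1..K}. prob (BB k))"
        unfolding B_def by (rule measure_UNION_le) (use BB in auto)
      also have "\<dots> \<le> (\<Sum>k\<in>{1..K}. d)" using BB by (intro sum_mono) auto
      also have "\<dots> = real K * d" by simp
      also have "\<dots> \<le> eta"
      proof -
        have "real K * d = eta * (real K / (real K + 1))" unfolding d_def by simp
        also have "\<dots> \<le> eta * 1" using eta_pos by (intro mult_left_mono) auto
        finally show ?thesis by simp
      qed
      finally have pB: "prob B \<le> eta" .
      have sub: "space M - B \<subseteq> Good n"
        unfolding Good_def B_def using BB by blast
      have "1 - eta \<le> prob (space M - B)" using pB prob_compl[OF Bs] by simp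
      also have "\<dots> \<le> prob (Good n)" by (rule finite_measure_mono[OF sub Good_sets])
      finally show ?case .
    qed
  qed
  have "eventually (\<lambda>n. ereal (1 - eta) \<le> ereal (prob (Good n))) sequentially"
    using Good_prob by eventually_elim simp
  then have "ereal (1 - eta) \<le> liminf (\<lambda>n. ereal (prob (Good n)))"
    by (rule Liminf_bounded)
  then show ?thesis unfolding goal_eq .
qed

end
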